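(* Let $\delta>0$ and $q>5+\delta$. There is a constant $C_{\delta,q}>0$ depending only on $\delta$ and $q$ such that for every nonnegative measurable $f$ on $\mathbb{T}^3\times\mathbb{R}^3\times\mathbb{R}^+$ with $0<\|f\|_{L^\infty_q}<\infty$, at every point $x$ where $\rho(x)>0$, $$\rho\,(T_\delta+|U|^2)^{\frac{q-\delta-3}{2}}\ \le\ C_{\delta,q}\,\|f\|_{L^\infty_q}.$$
   Context: Fix $\delta>0$. For a nonnegative measurable function $f=f(x,v,I)$ on $\mathbb{T}^3\times\mathbb{R}^3\times\mathbb{R}^+$ define at each $x$ the macroscopic fields $\rho=\int_{\mathbb{R}^3\times\mathbb{R}^+}f\,dv\,dI$, $U=\rho^{-1}\int vf\,dv\,dI$, the translational temperature $T_{tr}$ by $\frac32\rho T_{tr}=\int\frac12|v-U|^2 f\,dv\,dI$, the non-translational temperature $T_{I,\delta}$ by $\frac{\delta}{2}\rho T_{I,\delta}=\int I^{2/\delta}f\,dv\,dI$, and the temperature $T_\delta=\frac{3}{3+\delta}T_{tr}+\frac{\delta}{3+\delta}T_{I,\delta}$ (equivalently $\frac{3+\delta}{2}\rho T_\delta=\int(\frac12|v-U|^2+I^{2/\delta})f\,dv\,dI$). The weighted norm is $\|f\|_{L^\infty_q}=\operatorname{ess\,sup}_{x,v,I}|f(x,v,I)|(1+|v|^2+I^{2/\delta})^{q/2}$. *)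

theory Defs
  imports "HOL-Analysis.Analysis" "HOL-Probability.Essential_Supremum"
begin

text \<open>The torus T^3 is represented by the fundamental domain [0,1)^3 in real^3 with
  Lebesgue measure; velocity v :: real^3; internal energy variable I > 0.
  A distribution function is f :: real^3 => real^3 => real => real, f x v I.\<close>

definition torus :: "(real^3) set" where
  "torus = {x. \<forall>i. 0 \<le> x $ i \<and> x $ i < 1}"

definition torus_measure :: "(real^3) measure" where
  "torus_measure = restrict_space lborel torus"

definition vI_measure :: "((real^3) \<times> real) measure" where
  "vI_measure = restrict_space lborel (UNIV \<times> {0<..})"

definition phase_measure :: "((real^3) \<times> (real^3) \<times> real) measure" where
  "phase_measure = restrict_space lborel (torus \<times> UNIV \<times> {0<..})"

definition Lq_norm :: "real \<Rightarrow> real \<Rightarrow> (real^3 \<Rightarrow> real^3 \<Rightarrow> real \<Rightarrow> real) \<Rightarrow> ereal" where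
  "Lq_norm \<delta> q f = esssup phase_measure
     (\<lambda>(x, v, I). ereal (\<bar>f x v I\<bar> * (1 + (norm v)\<^sup>2 + I powr (2 / \<delta>)) powr (q / 2)))"

definition dens :: "(real^3 \<Rightarrow> real^3 \<Rightarrow> real \<Rightarrow> real) \<Rightarrow> real^3 \<Rightarrow> real" where
  "dens f x = (\<integral>(v, I). f x v I \<partial>vI_measure)"

definition bulk_vel :: "(real^3 \<Rightarrow> real^3 \<Rightarrow> real \<Rightarrow> real) \<Rightarrow> real^3 \<Rightarrow> real^3" where
  "bulk_vel f x = (1 / dens f x) *\<^sub>R (\<integral>(v, I). f x v I *\<^sub>R v \<partial>vI_measure)"

definition temp :: "real \<Rightarrow> (real^3 \<Rightarrow> real^3 \<Rightarrow> real \<Rightarrow> real) \<Rightarrow> real^3 \<Rightarrow> real" where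
  "temp \<delta> f x = (2 / ((3 + \<delta>) * dens f x)) *
     (\<integral>(v, I). ((norm (v - bulk_vel f x))\<^sup>2 / 2 + I powr (2 / \<delta>)) * f x v I \<partial>vI_measure)"

end

theory Submission
  imports Defs
begin

definition wt :: "real \<Rightarrow> (real^3) \<times> real \<Rightarrow> real" where
  "wt \<delta> z = (norm (fst z))\<^sup>2 + snd z powr (2/\<delta>)"

definition Kt :: "real \<Rightarrow> real \<Rightarrow> real" where
  "Kt \<delta> q = unit_ball_vol 3 * 2 powr (3+\<delta>) / (1 - 2 powr (5+\<delta>-q))"

lemma spM: "space vI_measure = UNIV \<times> {0<..}"
  by (simp add: vI_measure_def space_restrict_space)

lemma snd_bm[measurable]: "(snd :: (real^3) \<times> real \<Rightarrow> real) \<in> borel_measurable borel"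
  by (intro borel_measurable_continuous_onI continuous_intros)
lemma fst_bm[measurable]: "(fst :: (real^3) \<times> real \<Rightarrow> real^3) \<in> borel_measurable borel"
  by (intro borel_measurable_continuous_onI continuous_intros)

lemma Smeas: "(UNIV \<times> {0<..} :: ((real^3) \<times> real) set) \<in> sets lborel"
proof -
  have "(UNIV \<times> {0<..} :: ((real^3) \<times> real) set) = {z \<in> space lborel. 0 < snd z}" by auto
  also have "\<dots> \<in> sets lborel" by measurable
  finally show ?thesis .
qed

lemma wt_meas: "wt \<delta> \<in> borel_measurable vI_measure"
  unfolding wt_def vI_measure_def
  by (intro measurable_restrict_space1) measurable

lemma term_le_suminf: "(f k::ennreal) \<le> (\<Sum>k. f k)"
  using sum_le_suminf[of f "{k}"] by (simp add: summableI)

lemma pow2sq: "((2::real)^n)\<^sup>2 = 4^n"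
  by (simp add: power2_eq_square power_mult_distrib[symmetric])

lemma ball_box_meas:
  assumes "r \<ge> 0"
  shows "emeasure lborel (cball (0::real^3) r \<times> {0..r powr \<delta>}) = ennreal (unit_ball_vol 3 * r^3 * r powr \<delta>)"
proof -
  have "emeasure lborel (cball (0::real^3) r \<times> {0..r powr \<delta>}) =
        emeasure (lborel \<Otimes>\<^sub>M lborel) (cball (0::real^3) r \<times> {0..r powr \<delta>})"
    by (simp add: lborel_prod)
  also have "\<dots> = emeasure lborel (cball (0::real^3) r) * emeasure lborel {0..r powr \<delta>}"
    by (rule lborel.emeasure_pair_measure_Times) auto
  also have "\<dots> = ennreal (unit_ball_vol 3 * r^3) * ennreal (r powr \<delta>)"
    using assms by (simp add: emeasure_cball)
  also have "\<dots> = ennreal (unit_ball_vol 3 * r^3 * r powr \<delta>)"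
    using assms by (simp add: ennreal_mult)
  finally show ?thesis .
qed

lemma pw_power_eq:
  fixes k :: nat
  assumes d: "\<delta> > 0" and R: "R > 0"
  shows "(4^k * R\<^sup>2) powr (1 - q/2) * (unit_ball_vol 3 * (2^(k+1)*R)^3 * (2^(k+1)*R) powr \<delta>)
       = unit_ball_vol 3 * 2 powr (3+\<delta>) * R powr (5+\<delta>-q) * (2 powr (5+\<delta>-q))^k"
proof -
  define L2 where "L2 = ln (2::real)"
  define LR where "LR = ln R"
  define V where "V = unit_ball_vol 3"
  have l4: "ln (4::real) = 2 * L2" using ln_realpow[of 2 2] by (simp add: L2_def)
  have lX: "ln (2^(k+1)*R) = (real k + 1) * L2 + LR"
    using R by (simp add: ln_mult ln_realpow L2_def LR_def algebra_simps)
  have lY: "ln (4^k * R\<^sup>2) = real k * (2 * L2) + 2 * LR"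
    using R by (simp add: ln_mult ln_realpow l4 LR_def)
  have A: "(4^k * R\<^sup>2) powr (1 - q/2) = exp ((1 - q/2) * (real k * (2 * L2) + 2 * LR))"
    using R by (simp add: powr_def lY)
  have B: "(2^(k+1)*R)^3 = exp (3 * ((real k + 1) * L2 + LR))"
  proof -
    have "(2^(k+1)*R)^3 = exp (ln ((2^(k+1)*R)^3))" using R by simp
    also have "ln ((2^(k+1)*R)^3) = 3 * ln (2^(k+1)*R)"
      using R by (subst ln_realpow) auto
    finally show ?thesis by (simp only: lX)
  qed
  have C: "(2^(k+1)*R) powr \<delta> = exp (\<delta> * ((real k + 1) * L2 + LR))"
  proof -
    have pos: "(2::real)^(k+1)*R \<noteq> 0" using R by simp
    show ?thesis by (subst powr_def) (simp only: lX if_not_P[OF pos])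
  qed
  have D: "(2::real) powr (3+\<delta>) = exp ((3+\<delta>) * L2)" by (simp add: powr_def L2_def)
  have E: "R powr (5+\<delta>-q) = exp ((5+\<delta>-q) * LR)" using R by (simp add: powr_def LR_def)
  have F: "((2::real) powr (5+\<delta>-q))^k = exp (real k * ((5+\<delta>-q) * L2))"
    by (simp add: powr_def L2_def exp_of_nat_mult[symmetric])
  have "(4^k * R\<^sup>2) powr (1 - q/2) * (V * (2^(k+1)*R)^3 * (2^(k+1)*R) powr \<delta>)
      = V * (exp ((1 - q/2) * (real k * (2 * L2) + 2 * LR)) * exp (3 * ((real k + 1) * L2 + LR))
              * exp (\<delta> * ((real k + 1) * L2 + LR)))"
    unfolding A B C by (simp only: mult_ac)
  also have "\<dots> = V * exp ((1 - q/2) * (real k * (2 * L2) + 2 * LR) + 3 * ((real k + 1) * L2 + LR)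
              + \<delta> * ((real k + 1) * L2 + LR))"
    by (simp only: exp_add)
  also have "(1 - q/2) * (real k * (2 * L2) + 2 * LR) + 3 * ((real k + 1) * L2 + LR)
              + \<delta> * ((real k + 1) * L2 + LR) = (3+\<delta>) * L2 + (5+\<delta>-q) * LR + real k * ((5+\<delta>-q) * L2)"
    by (simp add: algebra_simps)
  also have "V * exp ((3+\<delta>) * L2 + (5+\<delta>-q) * LR + real k * ((5+\<delta>-q) * L2))
     = V * 2 powr (3+\<delta>) * R powr (5+\<delta>-q) * (2 powr (5+\<delta>-q))^k"
    unfolding D E F by (simp only: exp_add mult_ac)
  finally show ?thesis by (simp only: V_def)
qed

lemma cball_emeas_bound:
  assumes d: "\<delta> > 0" and r: "r \<ge> 0"
  shows "emeasure vI_measure {z \<in> space vI_measure. wt \<delta> z \<le> r\<^sup>2}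
           \<le> ennreal (unit_ball_vol 3 * r^3 * r powr \<delta>)"
proof -
  let ?B = "{z \<in> space vI_measure. wt \<delta> z \<le> r\<^sup>2}"
  have "emeasure vI_measure ?B = emeasure lborel ?B"
    unfolding vI_measure_def
    by (rule emeasure_restrict_space) (use Smeas in \<open>auto simp: spM[unfolded vI_measure_def]\<close>)
  also have "\<dots> \<le> emeasure lborel (cball (0::real^3) r \<times> {0..r powr \<delta>})"
  proof (rule emeasure_mono)
    show "?B \<subseteq> cball 0 r \<times> {0..r powr \<delta>}"
    proof
      fix z assume zB: "z \<in> ?B"
      obtain v I where z: "z = (v, I)" by (cases z)
      have I: "I > 0" using zB z by (simp add: spM)
      have w: "wt \<delta> (v, I) \<le> r\<^sup>2" using zB z by simp
      have p: "I powr (2/\<delta>) \<ge> 0" by simp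
      have w': "(norm v)\<^sup>2 + I powr (2/\<delta>) \<le> r\<^sup>2" using w by (simp add: wt_def)
      have "(norm v)\<^sup>2 \<le> r\<^sup>2" using w' p by linarith
      then have nv: "norm v \<le> r" using r by (simp add: power2_le_iff_abs_le)
      have "I powr (2/\<delta>) \<le> r\<^sup>2" using w' zero_le_power2[of "norm v"] by linarith
      then have "(I powr (2/\<delta>)) powr (\<delta>/2) \<le> (r\<^sup>2) powr (\<delta>/2)"
        using d by (intro powr_mono2) auto
      also have "(I powr (2/\<delta>)) powr (\<delta>/2) = I" using d I by (simp add: powr_powr)
      also have "(r\<^sup>2) powr (\<delta>/2) = r powr \<delta>"
      proof (cases "r = 0")
        case True then show ?thesis by simp
      next
        case False
        have "r\<^sup>2 = r powr 2" using powr_realpow[of r 2] False r by simp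
        then show ?thesis by (simp add: powr_powr)
      qed
      finally show "z \<in> cball 0 r \<times> {0..r powr \<delta>}" using nv I z by auto
    qed
    have "cball (0::real^3) r \<times> {0..r powr \<delta>} \<in> sets (lborel \<Otimes>\<^sub>M lborel)" by auto
    then show "cball (0::real^3) r \<times> {0..r powr \<delta>} \<in> sets lborel" by (simp only: lborel_prod)
  qed
  also have "\<dots> = ennreal (unit_ball_vol 3 * r^3 * r powr \<delta>)" by (rule ball_box_meas[OF r])
  finally show ?thesis .
qed

lemma tail0:
  assumes d: "\<delta> > 0" and qd: "q > 5 + \<delta>" and R: "R > 0"
  shows "(\<integral>\<^sup>+z. ennreal (indicator {z. wt \<delta> z > R\<^sup>2} z * wt \<delta> z powr (1 - q/2)) \<partial>vI_measure)
           \<le> ennreal (Kt \<delta> q * R powr (5+\<delta>-q))"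
proof -
  define r where "r k = 2^(k+1) * R" for k :: nat
  define c where "c k = (4^k * R\<^sup>2) powr (1 - q/2)" for k :: nat
  define B where "B k = {z \<in> space vI_measure. wt \<delta> z \<le> (r k)\<^sup>2}" for k
  define \<rho> where "\<rho> = (2::real) powr (5+\<delta>-q)"
  define V where "V = unit_ball_vol 3"
  have \<rho>0: "0 < \<rho>" by (simp add: \<rho>_def)
  have "\<rho> < 2 powr 0" unfolding \<rho>_def using qd by (intro powr_less_mono) auto
  then have \<rho>1: "\<rho> < 1" by simp
  have V0: "V > 0" by (simp add: V_def)
  have rsq: "(r k)\<^sup>2 = 4^(k+1) * R\<^sup>2" for k by (simp add: r_def power_mult_distrib pow2sq)
  note wt_meas[measurable]
  have Bm[measurable]: "B k \<in> sets vI_measure" for k unfolding B_def by measurable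
  have pw: "ennreal (indicator {z. wt \<delta> z > R\<^sup>2} z * wt \<delta> z powr (1 - q/2))
       \<le> (\<Sum>k. ennreal (c k) * indicator (B k) z)" if z: "z \<in> space vI_measure" for z
  proof (cases "wt \<delta> z > R\<^sup>2")
    case False then show ?thesis by simp
  next
    case True
    define w where "w = wt \<delta> z"
    have w0: "w > 0" using True zero_less_power[of R 2] R unfolding w_def by linarith
    obtain n where n: "w / R\<^sup>2 < 4^n" using real_arch_pow[of 4 "w / R\<^sup>2"] by auto
    have "w \<le> (r n)\<^sup>2"
    proof -
      have "w < 4^n * R\<^sup>2" using n R by (simp add: field_simps)
      also have "\<dots> \<le> 4^(n+1) * R\<^sup>2" by (intro mult_right_mono) auto
      finally show ?thesis by (simp add: rsq)
    qed
    then have ex: "\<exists>k. w \<le> (r k)\<^sup>2" by blast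
    define k0 where "k0 = (LEAST k. w \<le> (r k)\<^sup>2)"
    have k0: "w \<le> (r k0)\<^sup>2" unfolding k0_def by (rule LeastI_ex[OF ex])
    have lo: "4^k0 * R\<^sup>2 < w"
    proof (cases k0)
      case 0 with True show ?thesis by (simp add: w_def)
    next
      case (Suc j)
      then have "\<not> w \<le> (r j)\<^sup>2" using not_less_Least[of j "\<lambda>k. w \<le> (r k)\<^sup>2"] k0_def by auto
      then show ?thesis using Suc by (simp add: rsq)
    qed
    have "w powr (1 - q/2) \<le> c k0" unfolding c_def
      by (rule powr_mono2') (use lo qd R d in auto)
    moreover have "z \<in> B k0" using z k0 by (simp add: B_def w_def)
    ultimately have "ennreal (indicator {z. wt \<delta> z > R\<^sup>2} z * wt \<delta> z powr (1 - q/2))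
          \<le> ennreal (c k0) * indicator (B k0) z"
      using True by (simp add: w_def ennreal_leI)
    also have "\<dots> \<le> (\<Sum>k. ennreal (c k) * indicator (B k) z)"
      by (rule term_le_suminf)
    finally show ?thesis .
  qed
  have "(\<integral>\<^sup>+z. ennreal (indicator {z. wt \<delta> z > R\<^sup>2} z * wt \<delta> z powr (1 - q/2)) \<partial>vI_measure)
      \<le> (\<integral>\<^sup>+z. (\<Sum>k. ennreal (c k) * indicator (B k) z) \<partial>vI_measure)"
    by (intro nn_integral_mono pw)
  also have "\<dots> = (\<Sum>k. \<integral>\<^sup>+z. ennreal (c k) * indicator (B k) z \<partial>vI_measure)"
    by (rule nn_integral_suminf) measurable
  also have "\<dots> = (\<Sum>k. ennreal (c k) * emeasure vI_measure (B k))"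
    by (simp add: nn_integral_cmult_indicator)
  also have "\<dots> \<le> (\<Sum>k. ennreal (V * 2 powr (3+\<delta>) * R powr (5+\<delta>-q) * \<rho>^k))"
  proof (intro suminf_le summableI)
    fix k
    have "emeasure vI_measure (B k) \<le> ennreal (V * r k ^3 * r k powr \<delta>)"
      unfolding B_def V_def by (rule cball_emeas_bound) (use d R in \<open>auto simp: r_def\<close>)
    then have "ennreal (c k) * emeasure vI_measure (B k) \<le> ennreal (c k) * ennreal (V * r k ^3 * r k powr \<delta>)"
      by (rule mult_left_mono) simp
    also have "\<dots> = ennreal (c k * (V * r k ^3 * r k powr \<delta>))"
      using V0 R by (simp add: ennreal_mult c_def r_def)
    also have "c k * (V * r k ^3 * r k powr \<delta>) = V * 2 powr (3+\<delta>) * R powr (5+\<delta>-q) * \<rho>^k"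
      unfolding c_def r_def \<rho>_def V_def by (rule pw_power_eq[OF d R])
    finally show "ennreal (c k) * emeasure vI_measure (B k) \<le> ennreal (V * 2 powr (3+\<delta>) * R powr (5+\<delta>-q) * \<rho>^k)" .
  qed
  also have "\<dots> = ennreal (\<Sum>k. V * 2 powr (3+\<delta>) * R powr (5+\<delta>-q) * \<rho>^k)"
    using V0 \<rho>0 \<rho>1
    by (intro suminf_ennreal2) (auto intro!: summable_mult summable_geometric)
  also have "(\<Sum>k. V * 2 powr (3+\<delta>) * R powr (5+\<delta>-q) * \<rho>^k) = V * 2 powr (3+\<delta>) * R powr (5+\<delta>-q) * (1 / (1 - \<rho>))"
    using \<rho>0 \<rho>1 by (subst suminf_mult) (auto simp: suminf_geometric intro!: summable_geometric)
  also have "\<dots> = Kt \<delta> q * R powr (5+\<delta>-q)"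
    by (simp add: Kt_def V_def \<rho>_def)
  finally show ?thesis .
qed

definition Kc :: "real \<Rightarrow> real \<Rightarrow> real" where
  "Kc \<delta> q = (1 + Kt \<delta> q + (2 + Kt \<delta> q)\<^sup>2 / 2) powr ((q - \<delta> - 3) / 2)"

lemma Kt_nonneg:
  assumes qd: "q > 5 + \<delta>" shows "Kt \<delta> q \<ge> 0"
proof -
  have "(2::real) powr (5+\<delta>-q) < 2 powr 0" using qd by (intro powr_less_mono) auto
  then have "1 - (2::real) powr (5+\<delta>-q) > 0" by simp
  then show ?thesis unfolding Kt_def by (intro divide_nonneg_pos mult_nonneg_nonneg) auto
qed

lemma Kc_pos:
  assumes qd: "q > 5 + \<delta>" shows "Kc \<delta> q > 0"
  using Kt_nonneg[OF qd] unfolding Kc_def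
  by (intro powr_gt_zero[THEN iffD2]) (smt (verit) zero_le_power2 divide_nonneg_pos)

lemma fstM[measurable]: "fst \<in> borel_measurable vI_measure"
  unfolding vI_measure_def by (intro measurable_restrict_space1) measurable

lemma sndM[measurable]: "snd \<in> borel_measurable vI_measure"
  unfolding vI_measure_def by (intro measurable_restrict_space1) measurable

lemma integral_le_nn:
  fixes h :: "'a \<Rightarrow> real"
  assumes nn: "\<And>z. z \<in> space M \<Longrightarrow> 0 \<le> h z"
    and le: "(\<integral>\<^sup>+z. ennreal (h z) \<partial>M) \<le> ennreal b" and b: "0 \<le> b"
  shows "integral\<^sup>L M h \<le> b"
proof (cases "integrable M h")
  case True
  then have "integral\<^sup>L M h = enn2real (\<integral>\<^sup>+z. ennreal (h z) \<partial>M)"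
    using nn by (intro integral_eq_nn_integral) (auto intro: AE_I2)
  also have "\<dots> \<le> enn2real (ennreal b)"
    using le by (intro enn2real_mono) auto
  finally show ?thesis using b by simp
next
  case False then show ?thesis using b by (simp add: not_integrable_integral_eq)
qed

lemma norm_integral_le_nn:
  fixes f :: "'a \<Rightarrow> 'b::{banach,second_countable_topology}"
  shows "ennreal (norm (integral\<^sup>L M f)) \<le> (\<integral>\<^sup>+z. ennreal (norm (f z)) \<partial>M)"
proof (cases "integrable M f")
  case True then show ?thesis by (rule integral_norm_bound_ennreal)
next
  case False then show ?thesis by (simp add: not_integrable_integral_eq)
qed

lemma enn_le_add_mult:
  fixes a b c d :: real
  assumes "a \<le> b + c * d" "0 \<le> b" "0 \<le> c" "0 \<le> d"
  shows "ennreal a \<le> ennreal b + ennreal c * ennreal d"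
proof -
  have "ennreal a \<le> ennreal (b + c * d)" by (rule ennreal_leI) fact
  also have "\<dots> = ennreal b + ennreal (c * d)" by (rule ennreal_plus) (use assms in auto)
  also have "ennreal (c * d) = ennreal c * ennreal d" by (rule ennreal_mult) (use assms in auto)
  finally show ?thesis .
qed

lemma pt_bound:
  fixes w gz N p :: real
  assumes "w > 0" "0 \<le> gz" "gz * (1+w) powr p \<le> N" "p \<ge> 0"
  shows "w * gz \<le> N * w powr (1 - p)"
proof -
  have "w powr p \<le> (1+w) powr p" using assms by (intro powr_mono2) auto
  then have "gz * w powr p \<le> N" using assms by (meson mult_left_mono order_trans)
  have "w = w powr (1-p) * w powr p" using assms by (simp add: powr_add[symmetric])
  then have "w * gz = w powr (1-p) * (gz * w powr p)" by (metis mult.assoc mult.commute)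
  also have "\<dots> \<le> w powr (1-p) * N" using \<open>gz * w powr p \<le> N\<close> by (intro mult_left_mono) auto
  finally show ?thesis by (simp add: mult.commute)
qed

lemma per_x:
  fixes f :: "real^3 \<Rightarrow> real^3 \<Rightarrow> real \<Rightarrow> real" and x :: "real^3"
  assumes d: "\<delta> > 0" and qd: "q > 5+\<delta>" and N: "N > 0"
    and nn: "\<And>v I. I > 0 \<Longrightarrow> 0 \<le> f x v I"
    and bnd: "AE z in vI_measure. f x (fst z) (snd z) * (1 + wt \<delta> z) powr (q/2) \<le> N"
    and pos: "dens f x > 0"
  shows "dens f x * (temp \<delta> f x + (norm (bulk_vel f x))\<^sup>2) powr ((q-\<delta>-3)/2) \<le> Kc \<delta> q * N"
proof -
  define M where "M = vI_measure"
  define g where "g z = f x (fst z) (snd z)" for z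
  define \<rho> where "\<rho> = dens f x"
  define U where "U = bulk_vel f x"
  define K where "K = Kt \<delta> q"
  have K0: "K \<ge> 0" using Kt_nonneg[OF qd] by (simp add: K_def)
  have \<rho>0: "\<rho> > 0" using pos by (simp add: \<rho>_def)
  have \<rho>_eq: "\<rho> = integral\<^sup>L M g"
    unfolding \<rho>_def dens_def M_def g_def by (simp add: case_prod_beta')
  have U_eq: "U = (1/\<rho>) *\<^sub>R integral\<^sup>L M (\<lambda>z. g z *\<^sub>R fst z)"
    unfolding U_def bulk_vel_def \<rho>_def M_def g_def by (simp add: case_prod_beta')
  define h where "h z = ((norm (fst z - U))\<^sup>2 / 2 + snd z powr (2/\<delta>)) * g z" for z
  have T_eq: "temp \<delta> f x = (2 / ((3+\<delta>) * \<rho>)) * integral\<^sup>L M h"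
    unfolding temp_def \<rho>_def M_def g_def h_def U_def by (simp add: case_prod_beta')
  have g_nn: "0 \<le> g z" if "z \<in> space M" for z
    using that nn by (auto simp: g_def M_def spM)
  have w_nn: "0 \<le> wt \<delta> z" for z by (simp add: wt_def)
  have int: "integrable M g"
  proof (rule ccontr)
    assume "\<not> integrable M g"
    then have "integral\<^sup>L M g = 0" by (rule not_integrable_integral_eq)
    with \<rho>_eq \<rho>0 show False by simp
  qed
  have gm[measurable]: "g \<in> borel_measurable M" using int by auto
  note wt_meas[measurable]
  have Mm[measurable]: "wt \<delta> \<in> borel_measurable M" by (simp add: M_def)
  have fstM'[measurable]: "fst \<in> borel_measurable M" by (simp add: M_def)
  have \<rho>g: "(\<integral>\<^sup>+z. ennreal (g z) \<partial>M) = ennreal \<rho>"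
    unfolding \<rho>_eq using int g_nn by (intro nn_integral_eq_integral) (auto intro: AE_I2)
  define R where "R = (N/\<rho>) powr (1/(q-\<delta>-3))"
  have R0: "R > 0" using N \<rho>0 by (simp add: R_def)
  have RQ: "R powr (q-\<delta>-3) = N/\<rho>"
    unfolding R_def using N \<rho>0 qd by (simp add: powr_powr)
  have key: "N * R powr (5+\<delta>-q) = R\<^sup>2 * \<rho>"
  proof -
    have "R powr (5+\<delta>-q) = R powr (2 - (q-\<delta>-3))"
      by (rule arg_cong[where f="\<lambda>t. R powr t"]) simp
    also have "\<dots> = R powr 2 / R powr (q-\<delta>-3)" by (rule powr_diff)
    also have "R powr 2 = R\<^sup>2" using R0 by (simp add: powr_realpow[of R 2, simplified])
    finally have "R powr (5+\<delta>-q) = R\<^sup>2 / (N/\<rho>)" by (simp only: RQ)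
    then show ?thesis using N \<rho>0 by (simp add: field_simps)
  qed
  have tailg: "(\<integral>\<^sup>+z. ennreal (indicator {z. wt \<delta> z > R\<^sup>2} z * wt \<delta> z * g z) \<partial>M)
      \<le> ennreal (N * (K * R powr (5+\<delta>-q)))"
  proof -
    have "(\<integral>\<^sup>+z. ennreal (indicator {z. wt \<delta> z > R\<^sup>2} z * wt \<delta> z * g z) \<partial>M)
       \<le> (\<integral>\<^sup>+z. ennreal N * ennreal (indicator {z. wt \<delta> z > R\<^sup>2} z * wt \<delta> z powr (1 - q/2)) \<partial>M)"
    proof (rule nn_integral_mono_AE)
      show "AE z in M. ennreal (indicator {z. wt \<delta> z > R\<^sup>2} z * wt \<delta> z * g z)
         \<le> ennreal N * ennreal (indicator {z. wt \<delta> z > R\<^sup>2} z * wt \<delta> z powr (1 - q/2))"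
        using bnd[unfolded M_def[symmetric]] AE_space[of M]
      proof (eventually_elim)
        case (elim z)
        show ?case
        proof (cases "wt \<delta> z > R\<^sup>2")
          case True
          have w0: "wt \<delta> z > 0" using True zero_less_power[of R 2] R0 by linarith
          have "wt \<delta> z * g z \<le> N * wt \<delta> z powr (1 - q/2)"
            by (rule pt_bound) (use w0 elim g_nn[of z] qd d in \<open>auto simp: g_def\<close>)
          then have "indicator {z. wt \<delta> z > R\<^sup>2} z * wt \<delta> z * g z
              \<le> 0 + N * (indicator {z. wt \<delta> z > R\<^sup>2} z * wt \<delta> z powr (1 - q/2))"
            using True by simp
          then have "ennreal (indicator {z. wt \<delta> z > R\<^sup>2} z * wt \<delta> z * g z)
              \<le> ennreal 0 + ennreal N * ennreal (indicator {z. wt \<delta> z > R\<^sup>2} z * wt \<delta> z powr (1 - q/2))"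
            using N True by (intro enn_le_add_mult) auto
          then show ?thesis by simp
        next
          case False then show ?thesis by simp
        qed
      qed
    qed
    also have "\<dots> = ennreal N * (\<integral>\<^sup>+z. ennreal (indicator {z. wt \<delta> z > R\<^sup>2} z * wt \<delta> z powr (1 - q/2)) \<partial>M)"
      by (rule nn_integral_cmult) measurable
    also have "\<dots> \<le> ennreal N * ennreal (K * R powr (5+\<delta>-q))"
      unfolding M_def K_def by (intro mult_left_mono tail0[OF d qd R0]) auto
    also have "\<dots> = ennreal (N * (K * R powr (5+\<delta>-q)))"
      using N K0 by (simp add: ennreal_mult)
    finally show ?thesis .
  qed
  define W where "W = (\<integral>\<^sup>+z. ennreal (wt \<delta> z * g z) \<partial>M)"
  have W_le: "W \<le> ennreal ((1+K) * R\<^sup>2 * \<rho>)"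
  proof -
    have "W \<le> (\<integral>\<^sup>+z. ennreal (R\<^sup>2 * g z) + ennreal (indicator {z. wt \<delta> z > R\<^sup>2} z * wt \<delta> z * g z) \<partial>M)"
      unfolding W_def
    proof (rule nn_integral_mono)
      fix z assume z: "z \<in> space M"
      have "wt \<delta> z * g z \<le> R\<^sup>2 * g z + indicator {z. wt \<delta> z > R\<^sup>2} z * (wt \<delta> z * g z)"
      proof (cases "wt \<delta> z > R\<^sup>2")
        case True
        have "0 \<le> R\<^sup>2 * g z" using g_nn[OF z] by simp
        then show ?thesis using True by simp
      next
        case False
        then have "wt \<delta> z * g z \<le> R\<^sup>2 * g z" using g_nn[OF z] by (intro mult_right_mono) auto
        then show ?thesis using False by simp
      qed
      then have "ennreal (wt \<delta> z * g z) \<le> ennreal (R\<^sup>2 * g z) + ennreal (indicator {z. wt \<delta> z > R\<^sup>2} z) * ennreal (wt \<delta> z * g z)"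
        using g_nn[OF z] w_nn[of z] by (intro enn_le_add_mult) auto
      also have "ennreal (indicator {z. wt \<delta> z > R\<^sup>2} z) * ennreal (wt \<delta> z * g z) = ennreal (indicator {z. wt \<delta> z > R\<^sup>2} z * wt \<delta> z * g z)"
        by (simp add: indicator_def)
      finally show "ennreal (wt \<delta> z * g z) \<le> ennreal (R\<^sup>2 * g z) + ennreal (indicator {z. wt \<delta> z > R\<^sup>2} z * wt \<delta> z * g z)" .
    qed
    also have "\<dots> = (\<integral>\<^sup>+z. ennreal (R\<^sup>2 * g z) \<partial>M) + (\<integral>\<^sup>+z. ennreal (indicator {z. wt \<delta> z > R\<^sup>2} z * wt \<delta> z * g z) \<partial>M)"
      by (rule nn_integral_add) measurable
    also have "(\<integral>\<^sup>+z. ennreal (R\<^sup>2 * g z) \<partial>M) = ennreal (R\<^sup>2 * \<rho>)"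
    proof -
      have "(\<integral>\<^sup>+z. ennreal (R\<^sup>2 * g z) \<partial>M) = (\<integral>\<^sup>+z. ennreal (R\<^sup>2) * ennreal (g z) \<partial>M)"
        by (simp add: ennreal_mult')
      also have "\<dots> = ennreal (R\<^sup>2) * (\<integral>\<^sup>+z. ennreal (g z) \<partial>M)"
        by (rule nn_integral_cmult) measurable
      finally show ?thesis using \<rho>g \<rho>0 by (simp add: ennreal_mult')
    qed
    also have "ennreal (R\<^sup>2 * \<rho>) + (\<integral>\<^sup>+z. ennreal (indicator {z. wt \<delta> z > R\<^sup>2} z * wt \<delta> z * g z) \<partial>M)
        \<le> ennreal (R\<^sup>2 * \<rho>) + ennreal (N * (K * R powr (5+\<delta>-q)))"
      by (intro add_left_mono tailg)
    also have "\<dots> = ennreal ((1+K) * R\<^sup>2 * \<rho>)"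
    proof -
      have b: "N * (K * R powr (5+\<delta>-q)) = K * (R\<^sup>2 * \<rho>)" by (metis key mult.left_commute)
      have "ennreal (R\<^sup>2 * \<rho>) + ennreal (K * (R\<^sup>2 * \<rho>)) = ennreal (R\<^sup>2 * \<rho> + K * (R\<^sup>2 * \<rho>))"
        by (rule ennreal_plus[symmetric]) (use K0 \<rho>0 in auto)
      also have "R\<^sup>2 * \<rho> + K * (R\<^sup>2 * \<rho>) = (1+K) * R\<^sup>2 * \<rho>" by (simp add: algebra_simps)
      finally show ?thesis by (simp only: b)
    qed
    finally show ?thesis .
  qed
  have U_le: "norm U \<le> R * (2+K) / 2"
  proof -
    have "ennreal (norm (integral\<^sup>L M (\<lambda>z. g z *\<^sub>R fst z))) \<le> (\<integral>\<^sup>+z. ennreal (norm (g z *\<^sub>R fst z)) \<partial>M)"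
      by (rule norm_integral_le_nn)
    also have "\<dots> \<le> (\<integral>\<^sup>+z. ennreal (R/2 * g z) + ennreal (1/(2*R)) * ennreal (wt \<delta> z * g z) \<partial>M)"
    proof (rule nn_integral_mono)
      fix z assume z: "z \<in> space M"
      have a: "norm (fst z) \<le> R/2 + wt \<delta> z / (2*R)"
      proof -
        have "2 * R * norm (fst z) \<le> R\<^sup>2 + (norm (fst z))\<^sup>2"
          using zero_le_power2[of "norm (fst z) - R"] by (simp add: power2_diff algebra_simps)
        also have "\<dots> \<le> R\<^sup>2 + wt \<delta> z" by (simp add: wt_def)
        finally show ?thesis using R0 by (simp add: field_simps power2_eq_square)
      qed
      have "norm (g z *\<^sub>R fst z) = g z * norm (fst z)" using g_nn[OF z] by simp
      also have "\<dots> \<le> g z * (R/2 + wt \<delta> z / (2*R))" using a g_nn[OF z] by (intro mult_left_mono)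
      also have "\<dots> = R/2 * g z + 1/(2*R) * (wt \<delta> z * g z)" by (simp add: field_simps)
      finally show "ennreal (norm (g z *\<^sub>R fst z)) \<le> ennreal (R/2 * g z) + ennreal (1/(2*R)) * ennreal (wt \<delta> z * g z)"
        using g_nn[OF z] w_nn[of z] R0 by (intro enn_le_add_mult) auto
    qed
    also have "\<dots> = (\<integral>\<^sup>+z. ennreal (R/2 * g z) \<partial>M) + ennreal (1/(2*R)) * W"
    proof -
      have m1: "(\<lambda>z. ennreal (R/2 * g z)) \<in> borel_measurable M" by measurable
      have m2: "(\<lambda>z. ennreal (1/(2*R)) * ennreal (wt \<delta> z * g z)) \<in> borel_measurable M" by measurable
      have m3: "(\<lambda>z. ennreal (wt \<delta> z * g z)) \<in> borel_measurable M" by measurable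
      show ?thesis by (simp only: W_def nn_integral_add[OF m1 m2] nn_integral_cmult[OF m3])
    qed
    also have "(\<integral>\<^sup>+z. ennreal (R/2 * g z) \<partial>M) = ennreal (R/2 * \<rho>)"
    proof -
      have "(\<integral>\<^sup>+z. ennreal (R/2 * g z) \<partial>M) = (\<integral>\<^sup>+z. ennreal (R/2) * ennreal (g z) \<partial>M)"
        by (rule nn_integral_cong) (rule ennreal_mult', use R0 in simp)
      also have "\<dots> = ennreal (R/2) * (\<integral>\<^sup>+z. ennreal (g z) \<partial>M)"
        by (rule nn_integral_cmult) measurable
      also have "\<dots> = ennreal (R/2) * ennreal \<rho>" by (simp only: \<rho>g)
      also have "\<dots> = ennreal (R/2 * \<rho>)" by (rule ennreal_mult[symmetric]) (use R0 \<rho>0 in auto)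
      finally show ?thesis .
    qed
    also have "ennreal (R/2 * \<rho>) + ennreal (1/(2*R)) * W
        \<le> ennreal (R/2 * \<rho>) + ennreal (1/(2*R)) * ennreal ((1+K) * R\<^sup>2 * \<rho>)"
      by (intro add_left_mono mult_left_mono W_le) auto
    also have "\<dots> = ennreal (\<rho> * (R * (2+K) / 2))"
    proof -
      have e1: "ennreal (1/(2*R)) * ennreal ((1+K) * R\<^sup>2 * \<rho>) = ennreal (1/(2*R) * ((1+K) * R\<^sup>2 * \<rho>))"
        by (rule ennreal_mult[symmetric]) (use R0 K0 \<rho>0 in auto)
      have e2: "ennreal (R/2 * \<rho>) + ennreal (1/(2*R) * ((1+K) * R\<^sup>2 * \<rho>))
          = ennreal (R/2 * \<rho> + 1/(2*R) * ((1+K) * R\<^sup>2 * \<rho>))"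
        by (rule ennreal_plus[symmetric]) (use R0 K0 \<rho>0 in auto)
      have e3: "R/2 * \<rho> + 1/(2*R) * ((1+K) * R\<^sup>2 * \<rho>) = \<rho> * (R * (2+K) / 2)"
        using R0 by (simp add: field_simps power2_eq_square)
      show ?thesis by (unfold e1 e2 e3) (rule refl)
    qed
    finally have "norm (integral\<^sup>L M (\<lambda>z. g z *\<^sub>R fst z)) \<le> \<rho> * (R * (2+K) / 2)"
      using R0 \<rho>0 K0 by (subst (asm) ennreal_le_iff) auto
    then show ?thesis unfolding U_eq using \<rho>0 by (simp add: field_simps)
  qed
  have h_nn: "0 \<le> h z" if "z \<in> space M" for z
    using g_nn[OF that] unfolding h_def by (intro mult_nonneg_nonneg) auto
  have T_nn: "temp \<delta> f x \<ge> 0"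
    unfolding T_eq using h_nn \<rho>0 d by (intro mult_nonneg_nonneg integral_nonneg_AE AE_I2) auto
  have h_int: "integral\<^sup>L M h \<le> (1+K) * R\<^sup>2 * \<rho> + (norm U)\<^sup>2 * \<rho>"
  proof (rule integral_le_nn[OF h_nn])
    have "(\<integral>\<^sup>+z. ennreal (h z) \<partial>M) \<le> (\<integral>\<^sup>+z. ennreal (wt \<delta> z * g z) + ennreal ((norm U)\<^sup>2) * ennreal (g z) \<partial>M)"
    proof (rule nn_integral_mono)
      fix z assume z: "z \<in> space M"
      have "(norm (fst z - U))\<^sup>2 \<le> (norm (fst z) + norm U)\<^sup>2"
        using norm_triangle_ineq4[of "fst z" U] by (intro power_mono) auto
      also have "\<dots> \<le> 2 * (norm (fst z))\<^sup>2 + 2 * (norm U)\<^sup>2"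
        using zero_le_power2[of "norm (fst z) - norm U"] by (simp add: power2_sum power2_diff algebra_simps)
      finally have "(norm (fst z - U))\<^sup>2 / 2 + snd z powr (2/\<delta>) \<le> wt \<delta> z + (norm U)\<^sup>2"
        by (simp add: wt_def)
      then have "((norm (fst z - U))\<^sup>2 / 2 + snd z powr (2/\<delta>)) * g z \<le> (wt \<delta> z + (norm U)\<^sup>2) * g z"
        using g_nn[OF z] by (rule mult_right_mono)
      then have "h z \<le> wt \<delta> z * g z + (norm U)\<^sup>2 * g z"
        unfolding h_def by (simp only: distrib_right)
      then show "ennreal (h z) \<le> ennreal (wt \<delta> z * g z) + ennreal ((norm U)\<^sup>2) * ennreal (g z)"
        using g_nn[OF z] w_nn[of z] by (intro enn_le_add_mult) auto
    qed
    also have "\<dots> = W + ennreal ((norm U)\<^sup>2) * ennreal \<rho>"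
    proof -
      have m1: "(\<lambda>z. ennreal (wt \<delta> z * g z)) \<in> borel_measurable M" by measurable
      have m2: "(\<lambda>z. ennreal ((norm U)\<^sup>2) * ennreal (g z)) \<in> borel_measurable M" by measurable
      have m3: "(\<lambda>z. ennreal (g z)) \<in> borel_measurable M" by measurable
      show ?thesis by (simp only: W_def nn_integral_add[OF m1 m2] nn_integral_cmult[OF m3] \<rho>g)
    qed
    also have "\<dots> \<le> ennreal ((1+K) * R\<^sup>2 * \<rho>) + ennreal ((norm U)\<^sup>2) * ennreal \<rho>"
      by (intro add_right_mono W_le)
    also have "\<dots> = ennreal ((1+K) * R\<^sup>2 * \<rho> + (norm U)\<^sup>2 * \<rho>)"
    proof -
      have e1: "ennreal ((norm U)\<^sup>2) * ennreal \<rho> = ennreal ((norm U)\<^sup>2 * \<rho>)"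
        by (rule ennreal_mult[symmetric]) (use \<rho>0 in auto)
      have e2: "ennreal ((1+K) * R\<^sup>2 * \<rho>) + ennreal ((norm U)\<^sup>2 * \<rho>) = ennreal ((1+K) * R\<^sup>2 * \<rho> + (norm U)\<^sup>2 * \<rho>)"
        by (rule ennreal_plus[symmetric]) (use K0 \<rho>0 in auto)
      show ?thesis by (unfold e1 e2) (rule refl)
    qed
    finally show "(\<integral>\<^sup>+z. ennreal (h z) \<partial>M) \<le> ennreal ((1+K) * R\<^sup>2 * \<rho> + (norm U)\<^sup>2 * \<rho>)" .
    show "0 \<le> (1+K) * R\<^sup>2 * \<rho> + (norm U)\<^sup>2 * \<rho>" using K0 \<rho>0 by simp
  qed
  have T_le: "temp \<delta> f x \<le> (1+K) * R\<^sup>2 + (norm U)\<^sup>2"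
  proof -
    have "temp \<delta> f x \<le> (2 / ((3+\<delta>) * \<rho>)) * ((1+K) * R\<^sup>2 * \<rho> + (norm U)\<^sup>2 * \<rho>)"
      unfolding T_eq using h_int \<rho>0 d by (intro mult_left_mono) auto
    also have "\<dots> = (2 / (3+\<delta>)) * ((1+K) * R\<^sup>2 + (norm U)\<^sup>2)"
    proof -
      have p1: "\<delta> * \<rho> > 0" by (rule mult_pos_pos[OF d \<rho>0])
      have p2: "\<rho> * 3 > 0" using \<rho>0 by simp
      have nz1: "\<delta> * \<rho> + \<rho> * 3 \<noteq> 0" using p1 p2 by linarith
      have nz2: "\<delta> + 3 \<noteq> 0" using d by simp
      show ?thesis using nz1 nz2 \<rho>0 by (simp add: field_simps)
    qed
    also have "\<dots> \<le> 1 * ((1+K) * R\<^sup>2 + (norm U)\<^sup>2)"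
      using d K0 by (intro mult_right_mono) auto
    finally show ?thesis by simp
  qed
  define K2 where "K2 = 1 + K + (2 + K)\<^sup>2 / 2"
  have K2pos: "K2 > 0" using K0 unfolding K2_def by (smt (verit) zero_le_power2 divide_nonneg_pos)
  have sum_le: "temp \<delta> f x + (norm U)\<^sup>2 \<le> K2 * R\<^sup>2"
  proof -
    have "(norm U)\<^sup>2 \<le> (R * (2+K) / 2)\<^sup>2" using U_le by (intro power_mono) auto
    then have "temp \<delta> f x + (norm U)\<^sup>2 \<le> (1+K) * R\<^sup>2 + 2 * (R * (2+K) / 2)\<^sup>2"
      using T_le by linarith
    also have "\<dots> = K2 * R\<^sup>2" unfolding K2_def by (simp add: power2_eq_square field_simps)
    finally show ?thesis .
  qed
  have e0: "(q-\<delta>-3)/2 > 0" using qd by simp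
  have "\<rho> * (temp \<delta> f x + (norm U)\<^sup>2) powr ((q-\<delta>-3)/2) \<le> \<rho> * (K2 * R\<^sup>2) powr ((q-\<delta>-3)/2)"
    using sum_le T_nn \<rho>0 e0 by (intro mult_left_mono powr_mono2) auto
  also have "(K2 * R\<^sup>2) powr ((q-\<delta>-3)/2) = K2 powr ((q-\<delta>-3)/2) * (R\<^sup>2) powr ((q-\<delta>-3)/2)"
    using K2pos R0 by (simp add: powr_mult)
  also have "(R\<^sup>2) powr ((q-\<delta>-3)/2) = R powr (q-\<delta>-3)"
  proof -
    have eq: "R\<^sup>2 = R powr 2" using R0 by (simp add: powr_realpow[of R 2, simplified])
    have "(R\<^sup>2) powr ((q-\<delta>-3)/2) = (R powr 2) powr ((q-\<delta>-3)/2)" by (simp only: eq)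
    also have "\<dots> = R powr (2 * ((q-\<delta>-3)/2))" by (rule powr_powr)
    also have "2 * ((q-\<delta>-3)/2) = q-\<delta>-3" by simp
    finally show ?thesis .
  qed
  also have "\<rho> * (K2 powr ((q-\<delta>-3)/2) * R powr (q-\<delta>-3)) = K2 powr ((q-\<delta>-3)/2) * N"
    using RQ \<rho>0 by (simp add: field_simps)
  finally show ?thesis unfolding \<rho>_def U_def K2_def K_def Kc_def by simp
qed

lemma torus_meas[measurable]: "torus \<in> sets lborel"
  unfolding torus_def by measurable

theorem lemma3p3:
  fixes \<delta> q :: real
  assumes "\<delta> > 0" and "q > 5 + \<delta>"
  shows "\<exists>C>0. \<forall>f :: real^3 \<Rightarrow> real^3 \<Rightarrow> real \<Rightarrow> real.
           (\<lambda>(x, v, I). f x v I) \<in> borel_measurable phase_measure \<and>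
           (\<forall>x v I. x \<in> torus \<and> I > 0 \<longrightarrow> 0 \<le> f x v I) \<and>
           0 < Lq_norm \<delta> q f \<and> Lq_norm \<delta> q f < \<infinity>
           \<longrightarrow> (AE x in torus_measure. dens f x > 0 \<longrightarrow>
                 dens f x * (temp \<delta> f x + (norm (bulk_vel f x))\<^sup>2) powr ((q - \<delta> - 3) / 2)
                   \<le> C * real_of_ereal (Lq_norm \<delta> q f))"
proof (intro exI[of _ "Kc \<delta> q"] conjI allI impI)
  show "Kc \<delta> q > 0" by (rule Kc_pos) (use assms in auto)
  fix f :: "real^3 \<Rightarrow> real^3 \<Rightarrow> real \<Rightarrow> real"
  assume H: "(\<lambda>(x, v, I). f x v I) \<in> borel_measurable phase_measure \<and>
           (\<forall>x v I. x \<in> torus \<and> I > 0 \<longrightarrow> 0 \<le> f x v I) \<and>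
           0 < Lq_norm \<delta> q f \<and> Lq_norm \<delta> q f < \<infinity>"
  then have nn: "\<And>x v I. x \<in> torus \<Longrightarrow> I > 0 \<Longrightarrow> 0 \<le> f x v I"
    and Lpos: "0 < Lq_norm \<delta> q f" and Lfin: "Lq_norm \<delta> q f < \<infinity>" by auto
  define N where "N = real_of_ereal (Lq_norm \<delta> q f)"
  have LN: "Lq_norm \<delta> q f = ereal N" and N0: "N > 0"
    using Lpos Lfin unfolding N_def by (cases "Lq_norm \<delta> q f"; auto)+
  define P where "P x y = (\<bar>f x (fst y) (snd y)\<bar> * (1 + wt \<delta> y) powr (q/2) \<le> N)" for x y
  have "AE z in phase_measure. (\<lambda>(x, v, I). ereal (\<bar>f x v I\<bar> * (1 + (norm v)\<^sup>2 + I powr (2 / \<delta>)) powr (q / 2))) z \<le> Lq_norm \<delta> q f"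
    unfolding Lq_norm_def by (rule esssup_AE)
  then have AE1: "AE z in phase_measure. P (fst z) (snd z)"
    by (rule eventually_mono) (auto simp: LN P_def wt_def case_prod_beta' add.assoc)
  define S where "S = (UNIV \<times> {0<..} :: ((real^3) \<times> real) set)"
  have Sm: "S \<in> sets lborel" unfolding S_def by (rule Smeas)
  have TSm: "torus \<times> S \<in> sets (lborel \<Otimes>\<^sub>M lborel)"
    by (rule pair_measureI) (use Sm torus_meas in auto)
  have TSm': "torus \<times> S \<in> sets lborel" using TSm by (simp only: lborel_prod)
  have "AE z in lborel. z \<in> torus \<times> S \<longrightarrow> P (fst z) (snd z)"
    using AE1 unfolding phase_measure_def S_def
    by (subst (asm) AE_restrict_space_iff) (use TSm'[unfolded S_def] in auto)
  then have "AE z in (lborel \<Otimes>\<^sub>M lborel). z \<in> torus \<times> S \<longrightarrow> P (fst z) (snd z)"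
    by (simp only: lborel_prod)
  moreover have psf: "pair_sigma_finite lborel lborel"
    by (simp add: pair_sigma_finite_def lborel.sigma_finite_measure_axioms)
  ultimately have "AE x in lborel. AE y in lborel. (x, y) \<in> torus \<times> S \<longrightarrow> P x y"
    using pair_sigma_finite.AE_pair[OF psf] by fastforce
  then have "AE x in lborel. x \<in> torus \<longrightarrow> (AE y in vI_measure. P x y)"
  proof (rule eventually_mono)
    fix x assume A: "AE y in lborel. (x, y) \<in> torus \<times> S \<longrightarrow> P x y"
    show "x \<in> torus \<longrightarrow> (AE y in vI_measure. P x y)"
    proof
      assume "x \<in> torus"
      then have "AE y in lborel. y \<in> S \<longrightarrow> P x y" using A by auto
      then show "AE y in vI_measure. P x y"
        unfolding vI_measure_def S_def
        by (subst AE_restrict_space_iff) (use Sm[unfolded S_def] in auto)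
    qed
  qed
  then have AE2: "AE x in torus_measure. AE y in vI_measure. P x y"
    unfolding torus_measure_def
    by (subst AE_restrict_space_iff) (use torus_meas in auto)
  have AE3: "AE x in torus_measure. x \<in> torus"
    using AE_space[of torus_measure] by (simp add: torus_measure_def space_restrict_space)
  show "AE x in torus_measure. dens f x > 0 \<longrightarrow>
          dens f x * (temp \<delta> f x + (norm (bulk_vel f x))\<^sup>2) powr ((q - \<delta> - 3) / 2)
            \<le> Kc \<delta> q * real_of_ereal (Lq_norm \<delta> q f)"
    using AE2 AE3
  proof eventually_elim
    case (elim x)
    show ?case
    proof
      assume pos: "dens f x > 0"
      have bnd: "AE z in vI_measure. f x (fst z) (snd z) * (1 + wt \<delta> z) powr (q/2) \<le> N"
        using elim(1) AE_space[of vI_measure]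
      proof eventually_elim
        case (elim z)
        then have "0 \<le> f x (fst z) (snd z)" using nn[OF \<open>x \<in> torus\<close>] by (auto simp: spM)
        then show ?case using elim by (simp add: P_def)
      qed
      show "dens f x * (temp \<delta> f x + (norm (bulk_vel f x))\<^sup>2) powr ((q - \<delta> - 3) / 2)
            \<le> Kc \<delta> q * real_of_ereal (Lq_norm \<delta> q f)"
        unfolding N_def[symmetric]
        by (rule per_x[OF assms N0 _ bnd pos]) (use nn elim in auto)
    qed
  qed
qed


end
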